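(* Let $A \in M_n(\mathbb{C})$ be a normal matrix (i.e. $AA^*=A^*A$) which is $r_A$-row regular. Then $A$ is also $r_A$-column regular; in particular, $A$ is a semimagic square.
   Context: An $n\times n$ complex matrix $A=(a_{ij})$ is $r_A$-row regular if $\sum_{j=1}^n a_{ij}=r_A$ for every row $i$, and $c_A$-column regular if $\sum_{i=1}^n a_{ij}=c_A$ for every column $j$. A semimagic square is a matrix that is both $r_A$-row regular and $c_A$-column regular with $r_A=c_A$. $A^*$ denotes the conjugate transpose. *)

theory Defs
  imports "HOL-Analysis.Analysis"
begin

definition conj_transpose :: "complex^'n^'n \<Rightarrow> complex^'n^'n" where
  "conj_transpose A = (\<chi> i j. cnj (A $ j $ i))"

definition row_regular :: "complex^'n^'n \<Rightarrow> complex \<Rightarrow> bool" where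
  "row_regular A r \<longleftrightarrow> (\<forall>i. (\<Sum>j\<in>UNIV. A $ i $ j) = r)"

definition column_regular :: "complex^'n^'n \<Rightarrow> complex \<Rightarrow> bool" where
  "column_regular A c \<longleftrightarrow> (\<forall>j. (\<Sum>i\<in>UNIV. A $ i $ j) = c)"

definition semimagic :: "complex^'n^'n \<Rightarrow> bool" where
  "semimagic A \<longleftrightarrow> (\<exists>r c. row_regular A r \<and> column_regular A c \<and> r = c)"

end

theory Submission
  imports Defs
begin

theorem mainTheorem2:
  fixes A :: "complex^'n^'n" and r :: complex
  assumes "A ** conj_transpose A = conj_transpose A ** A"
    and "row_regular A r"
  shows "column_regular A r \<and> semimagic A"
proof -
  define c where "c j = (\<Sum>i\<in>UNIV. A $ i $ j)" for j
  have rs: "\<And>i. (\<Sum>j\<in>UNIV. A $ i $ j) = r" using assms(2) by (simp add: row_regular_def)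
  have "(\<Sum>i\<in>UNIV. \<Sum>k\<in>UNIV. (A ** conj_transpose A) $ i $ k)
      = (\<Sum>i\<in>UNIV. \<Sum>k\<in>UNIV. \<Sum>j\<in>UNIV. A $ i $ j * cnj (A $ k $ j))"
    by (simp add: matrix_matrix_mult_def conj_transpose_def)
  also have "\<dots> = (\<Sum>i\<in>UNIV. \<Sum>j\<in>UNIV. \<Sum>k\<in>UNIV. A $ i $ j * cnj (A $ k $ j))"
    by (rule sum.cong[OF refl], rule sum.swap)
  also have "\<dots> = (\<Sum>i\<in>UNIV. \<Sum>j\<in>UNIV. A $ i $ j * cnj (c j))"
    by (simp add: c_def sum_distrib_left)
  also have "\<dots> = (\<Sum>j\<in>UNIV. \<Sum>i\<in>UNIV. A $ i $ j * cnj (c j))"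
    by (rule sum.swap)
  also have "\<dots> = (\<Sum>j\<in>UNIV. c j * cnj (c j))"
    by (simp add: c_def sum_distrib_right)
  finally have S: "(\<Sum>i\<in>UNIV. \<Sum>k\<in>UNIV. (A ** conj_transpose A) $ i $ k) = (\<Sum>j\<in>UNIV. c j * cnj (c j))" .
  have "(\<Sum>i\<in>UNIV. \<Sum>k\<in>UNIV. (conj_transpose A ** A) $ i $ k)
      = (\<Sum>i\<in>UNIV. \<Sum>k\<in>UNIV. \<Sum>j\<in>UNIV. cnj (A $ j $ i) * A $ j $ k)"
    by (simp add: matrix_matrix_mult_def conj_transpose_def)
  also have "\<dots> = (\<Sum>i\<in>UNIV. \<Sum>j\<in>UNIV. \<Sum>k\<in>UNIV. cnj (A $ j $ i) * A $ j $ k)"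
    by (rule sum.cong[OF refl], rule sum.swap)
  also have "\<dots> = (\<Sum>i\<in>UNIV. \<Sum>j\<in>UNIV. cnj (A $ j $ i) * r)"
    by (simp add: sum_distrib_left[symmetric] rs)
  also have "\<dots> = (\<Sum>j\<in>UNIV. \<Sum>i\<in>UNIV. cnj (A $ j $ i) * r)"
    by (rule sum.swap)
  also have "\<dots> = (\<Sum>j\<in>UNIV. cnj (\<Sum>i\<in>UNIV. A $ j $ i) * r)"
    by (simp add: sum_distrib_right)
  also have "\<dots> = (\<Sum>j\<in>(UNIV::'n set). cnj r * r)" by (simp add: rs)
  finally have T: "(\<Sum>i\<in>UNIV. \<Sum>k\<in>UNIV. (conj_transpose A ** A) $ i $ k) = (\<Sum>j\<in>(UNIV::'n set). cnj r * r)" .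
  have cs: "(\<Sum>j\<in>UNIV. c j) = (\<Sum>j\<in>(UNIV::'n set). r)"
    unfolding c_def by (subst sum.swap) (simp add: rs)
  have cs': "(\<Sum>j\<in>UNIV. cnj (c j)) = (\<Sum>j\<in>(UNIV::'n set). cnj r)"
    using arg_cong[OF cs, of cnj] by simp
  have cc: "(\<Sum>j\<in>UNIV. c j * cnj (c j)) = (\<Sum>j\<in>(UNIV::'n set). cnj r * r)"
    using S T assms(1) by simp
  have "(\<Sum>j\<in>UNIV. (c j - r) * cnj (c j - r))
     = (\<Sum>j\<in>UNIV. c j * cnj (c j)) - cnj r * (\<Sum>j\<in>UNIV. c j) - r * (\<Sum>j\<in>UNIV. cnj (c j))
       + (\<Sum>j\<in>(UNIV::'n set). r * cnj r)"
    by (simp add: algebra_simps sum.distrib sum_subtractf sum_distrib_left)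
  also have "\<dots> = 0" by (simp add: cc cs cs' sum_distrib_left algebra_simps)
  finally have z: "(\<Sum>j\<in>UNIV. (c j - r) * cnj (c j - r)) = 0" .
  have z2: "(\<Sum>j\<in>UNIV. (cmod (c j - r))\<^sup>2) = 0"
  proof -
    have "complex_of_real (\<Sum>j\<in>UNIV. (cmod (c j - r))\<^sup>2) = (\<Sum>j\<in>UNIV. (c j - r) * cnj (c j - r))"
      unfolding of_real_sum by (rule sum.cong[OF refl]) (rule complex_norm_square)
    with z show ?thesis by (metis of_real_eq_0_iff)
  qed
  have "\<forall>j. c j = r"
  proof
    fix j
    have "(cmod (c j - r))\<^sup>2 = 0"
      using z2 sum_nonneg_eq_0_iff[of UNIV "\<lambda>j. (cmod (c j - r))\<^sup>2"] by simp
    thus "c j = r" by simp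
  qed
  hence col: "column_regular A r" by (simp add: column_regular_def c_def)
  thus ?thesis using assms(2) by (auto simp: semimagic_def)
qed

end
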